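(* Let $G=\langle V,E_s\rangle$ be an undirected graph with $V=\{1,\dots,n\}$, where edges are treated as bidirected (so $(i,j)\in E_s$ iff $(j,i)\in E_s$, and there are no loops). Let $\mu_{ij}=\mu_{ji}\ge 0$ ($i\neq j$) be requirements, and let $\delta=(\delta_1,\dots,\delta_n)$ be a sequence of positive integers with $\sum_i\delta_i=2(n-1)$ such that $G$ has at least one spanning tree in which every vertex $i$ has degree $\delta_i$ (call such spanning trees admissible). Let $m=|\{i:\delta_i>1\}|$ and $L=m+2$. For a spanning tree $T$ let $C_A(T)=\sum_{i\neq j}\mu_{ij}d_T(i,j)$, where $d_T(i,j)$ is the number of edges of the path from $i$ to $j$ in $T$; an admissible tree minimizing $C_A$ is called optimal. Consider the problem (relaxed F2Q) in variables $x_{ij}=x_{ji}\in\{0,1\}$ for $(i,j)\in E_s$ and $w^{(\ell)}_{ij}=w^{(\ell)}_{ji}\in[0,1]$ for $i\neq j\in V$, $\ell\in\{1,\dots,L\}$: minimize $\displaystyle\sum_{i,j=1,\,i\neq j}^n \mu_{ij}\Big(L-\sum_{\ell=1}^{L-1} w^{(\ell)}_{ij}\Big)$ subject to - $w^{(1)}_{ij}=x_{ij}$ for all $(i,j)\in E_s$; - $w^{(1)}_{ij}=0$ for all $i<j$ with $(i,j)\notin E_s$; - $w^{(\ell)}_{ij}\le x_{ij}+\sum_{k\neq j:(i,k)\in E_s}x_{ik}w^{(\ell-1)}_{kj}$ for all $(i,j)\in E_s$, $i<j$, $\ell\in\{2,\dots,L\}$; - $w^{(\ell)}_{ij}\le \sum_{k\neq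 j:(i,k)\in E_s}x_{ik}w^{(\ell-1)}_{kj}$ for all $i<j$ with $(i,j)\notin E_s$, $\ell\in\{2,\dots,L\}$; - $w^{(L)}_{ij}=1$ for all $i<j$; - $\sum_{j:(i,j)\in E_s}x_{ij}=\delta_i$ for all $i\in V$. Then there exists an optimal solution $(x^*,w^* )$ of this problem such that the edges $\{(i,j)\in E_s: x^*_{ij}=1\}$ form an optimal tree $T^*$ and the optimal objective value equals $C_A(T^* )$.
   Context: The variables $w^{(\ell)}_{ij}$ are intended to indicate whether vertices $i$ and $j$ are joined by a path of length at most $\ell$ in the selected tree; in the unrelaxed problem they are binary, here they are relaxed to $[0,1]$ while $x$ stays binary. *)

theory Defs
  imports Main "HOL-Library.Extended_Real" Complex_Main
begin

definition walk :: "(nat \<times> nat) set \<Rightarrow> nat list \<Rightarrow> bool" where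
  "walk T xs \<longleftrightarrow> xs \<noteq> [] \<and> (\<forall>k. Suc k < length xs \<longrightarrow> (xs ! k, xs ! Suc k) \<in> T)"

definition connected_on :: "nat set \<Rightarrow> (nat \<times> nat) set \<Rightarrow> bool" where
  "connected_on V T \<longleftrightarrow> (\<forall>i\<in>V. \<forall>j\<in>V. \<exists>xs. walk T xs \<and> hd xs = i \<and> last xs = j)"

text \<open>A cycle: closed walk v0 .. vk = v0 with k >= 3 and v0..v(k-1) pairwise distinct.\<close>
definition has_cycle :: "(nat \<times> nat) set \<Rightarrow> bool" where
  "has_cycle T \<longleftrightarrow> (\<exists>xs. walk T xs \<and> length xs \<ge> 4 \<and> hd xs = last xs \<and> distinct (butlast xs))"

definition graph_on :: "nat set \<Rightarrow> (nat \<times> nat) set \<Rightarrow> bool" where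
  "graph_on V E \<longleftrightarrow> E \<subseteq> V \<times> V \<and> sym E \<and> (\<forall>i. (i, i) \<notin> E)"

definition spanning_tree :: "nat set \<Rightarrow> (nat \<times> nat) set \<Rightarrow> (nat \<times> nat) set \<Rightarrow> bool" where
  "spanning_tree V E T \<longleftrightarrow> T \<subseteq> E \<and> sym T \<and> connected_on V T \<and> \<not> has_cycle T"

definition vdeg :: "(nat \<times> nat) set \<Rightarrow> nat \<Rightarrow> nat" where
  "vdeg T i = card {j. (i, j) \<in> T}"

definition admissible :: "nat set \<Rightarrow> (nat \<times> nat) set \<Rightarrow> (nat \<Rightarrow> nat) \<Rightarrow> (nat \<times> nat) set \<Rightarrow> bool" where
  "admissible V E \<delta> T \<longleftrightarrow> spanning_tree V E T \<and> (\<forall>i\<in>V. vdeg T i = \<delta> i)"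

text \<open>Number of edges of the (unique, hence shortest) path from i to j in T.\<close>
definition tdist :: "(nat \<times> nat) set \<Rightarrow> nat \<Rightarrow> nat \<Rightarrow> nat" where
  "tdist T i j = (LEAST k. \<exists>xs. walk T xs \<and> hd xs = i \<and> last xs = j \<and> length xs = Suc k)"

definition CA :: "nat set \<Rightarrow> (nat \<Rightarrow> nat \<Rightarrow> real) \<Rightarrow> (nat \<times> nat) set \<Rightarrow> real" where
  "CA V \<mu> T = (\<Sum>i\<in>V. \<Sum>j\<in>V - {i}. \<mu> i j * real (tdist T i j))"

definition optimal_tree :: "nat set \<Rightarrow> (nat \<times> nat) set \<Rightarrow> (nat \<Rightarrow> nat) \<Rightarrow> (nat \<Rightarrow> nat \<Rightarrow> real)
    \<Rightarrow> (nat \<times> nat) set \<Rightarrow> bool" where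
  "optimal_tree V E \<delta> \<mu> T \<longleftrightarrow> admissible V E \<delta> T \<and>
     (\<forall>T'. admissible V E \<delta> T' \<longrightarrow> CA V \<mu> T \<le> CA V \<mu> T')"

definition F2Q_feasible :: "nat \<Rightarrow> (nat \<times> nat) set \<Rightarrow> (nat \<Rightarrow> nat) \<Rightarrow> nat
    \<Rightarrow> (nat \<Rightarrow> nat \<Rightarrow> real) \<Rightarrow> (nat \<Rightarrow> nat \<Rightarrow> nat \<Rightarrow> real) \<Rightarrow> bool" where
  "F2Q_feasible n E \<delta> L x w \<longleftrightarrow>
     (\<forall>(i, j)\<in>E. x i j \<in> {0, 1} \<and> x i j = x j i) \<and>
     (\<forall>i\<in>{1..n}. \<forall>j\<in>{1..n}. i \<noteq> j \<longrightarrow>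
        (\<forall>l\<in>{1..L}. w l i j = w l j i \<and> 0 \<le> w l i j \<and> w l i j \<le> 1)) \<and>
     (\<forall>(i, j)\<in>E. w 1 i j = x i j) \<and>
     (\<forall>i\<in>{1..n}. \<forall>j\<in>{1..n}. i < j \<and> (i, j) \<notin> E \<longrightarrow> w 1 i j = 0) \<and>
     (\<forall>(i, j)\<in>E. i < j \<longrightarrow> (\<forall>l\<in>{2..L}.
        w l i j \<le> x i j + (\<Sum>k\<in>{k\<in>{1..n}. k \<noteq> j \<and> (i, k) \<in> E}. x i k * w (l - 1) k j))) \<and>
     (\<forall>i\<in>{1..n}. \<forall>j\<in>{1..n}. i < j \<and> (i, j) \<notin> E \<longrightarrow> (\<forall>l\<in>{2..L}.
        w l i j \<le> (\<Sum>k\<in>{k\<in>{1..n}. k \<noteq> j \<and> (i, k) \<in> E}. x i k * w (l - 1) k j))) \<and>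
     (\<forall>i\<in>{1..n}. \<forall>j\<in>{1..n}. i < j \<longrightarrow> w L i j = 1) \<and>
     (\<forall>i\<in>{1..n}. (\<Sum>j\<in>{j\<in>{1..n}. (i, j) \<in> E}. x i j) = real (\<delta> i))"

definition F2Q_obj :: "nat \<Rightarrow> (nat \<Rightarrow> nat \<Rightarrow> real) \<Rightarrow> nat \<Rightarrow> (nat \<Rightarrow> nat \<Rightarrow> nat \<Rightarrow> real) \<Rightarrow> real" where
  "F2Q_obj n \<mu> L w = (\<Sum>i\<in>{1..n}. \<Sum>j\<in>{1..n} - {i}. \<mu> i j * (real L - (\<Sum>l\<in>{1..L-1}. w l i j)))"

end

theory Submission
  imports Defs
begin


lemma walk_Nil[simp]: "\<not> walk T []" by (simp add: walk_def)
lemma walk_single[simp]: "walk T [a]" by (simp add: walk_def)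
lemma walk_Cons2[simp]: "walk T (a # b # xs) \<longleftrightarrow> (a, b) \<in> T \<and> walk T (b # xs)"
proof
  assume "walk T (a # b # xs)"
  then show "(a, b) \<in> T \<and> walk T (b # xs)" unfolding walk_def
    by (metis Suc_less_eq length_Cons list.distinct(1) nth_Cons_0 nth_Cons_Suc zero_less_Suc)
next
  assume h: "(a, b) \<in> T \<and> walk T (b # xs)"
  show "walk T (a # b # xs)" unfolding walk_def
  proof (intro conjI allI impI)
    fix k assume "Suc k < length (a # b # xs)"
    then show "((a # b # xs) ! k, (a # b # xs) ! Suc k) \<in> T"
      using h unfolding walk_def by (cases k) auto
  qed simp
qed

lemma walk_append_iff: "walk T (xs @ y # ys) \<longleftrightarrow> walk T (xs @ [y]) \<and> walk T (y # ys)"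
proof (induction xs)
  case Nil then show ?case by simp
next
  case (Cons a xs) then show ?case by (cases xs) auto
qed

lemma walk_Cons_hd: "walk T ys \<Longrightarrow> (a, hd ys) \<in> T \<Longrightarrow> walk T (a # ys)"
  by (cases ys) auto

lemma walk_rev: "sym T \<Longrightarrow> walk T xs \<Longrightarrow> walk T (rev xs)"
proof (induction xs)
  case Nil then show ?case by simp
next
  case (Cons a xs)
  show ?case
  proof (cases xs)
    case Nil then show ?thesis by simp
  next
    case (Cons b zs)
    with Cons.prems have "(a,b) \<in> T" "walk T (b # zs)" by auto
    then have "walk T (rev (b # zs))" using Cons.IH Cons.prems \<open>xs = b # zs\<close> by simp
    moreover have "(b, a) \<in> T" using \<open>(a,b) \<in> T\<close> Cons.prems(1) by (meson symD)
    ultimately show ?thesis using \<open>xs = b # zs\<close> walk_append_iff[of T "rev zs" b "[a]"] by simp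
  qed
qed

definition reach :: "(nat \<times> nat) set \<Rightarrow> nat \<Rightarrow> nat \<Rightarrow> bool" where
  "reach T i j \<longleftrightarrow> (\<exists>xs. walk T xs \<and> hd xs = i \<and> last xs = j)"

lemma tdist_ex:
  assumes "reach T i j"
  shows "\<exists>xs. walk T xs \<and> hd xs = i \<and> last xs = j \<and> length xs = Suc (tdist T i j)"
proof -
  obtain xs where xs: "walk T xs" "hd xs = i" "last xs = j" using assms reach_def by blast
  then have "length xs = Suc (length xs - 1)" by (cases xs) auto
  with xs have "\<exists>k. \<exists>xs. walk T xs \<and> hd xs = i \<and> last xs = j \<and> length xs = Suc k" by blast
  then show ?thesis unfolding tdist_def by (rule LeastI_ex)
qed

lemma tdist_le:
  assumes "walk T xs" "hd xs = i" "last xs = j"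
  shows "tdist T i j \<le> length xs - 1"
proof -
  have "length xs = Suc (length xs - 1)" using assms by (cases xs) auto
  with assms show ?thesis unfolding tdist_def by (metis (mono_tags, lifting) Least_le)
qed

lemma tdist_zero: "reach T i j \<Longrightarrow> tdist T i j = 0 \<Longrightarrow> i = j"
  using tdist_ex[of T i j] by (metis One_nat_def hd_conv_nth last_conv_nth length_0_conv
      nat.distinct(1) diff_Suc_1)

lemma tdist_refl[simp]: "tdist T i i = 0"
  using tdist_le[of T "[i]" i i] by simp

lemma reach_sym: "sym T \<Longrightarrow> reach T i j \<Longrightarrow> reach T j i"
  unfolding reach_def by (metis walk_rev hd_rev last_rev)

lemma tdist_sym_le: "sym T \<Longrightarrow> reach T j i \<Longrightarrow> tdist T i j \<le> tdist T j i"
  using tdist_ex[of T j i] tdist_le[of T "rev _" i j] walk_rev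
  by (metis diff_Suc_1 hd_rev last_rev length_rev)

lemma tdist_sym: "sym T \<Longrightarrow> reach T i j \<Longrightarrow> tdist T i j = tdist T j i"
  by (meson le_antisym reach_sym tdist_sym_le)

lemma tdist_step:
  assumes "reach T i j" "i \<noteq> j"
  shows "\<exists>k. (i, k) \<in> T \<and> reach T k j \<and> tdist T k j < tdist T i j"
proof -
  obtain xs where xs: "walk T xs" "hd xs = i" "last xs = j" "length xs = Suc (tdist T i j)"
    using tdist_ex[OF assms(1)] by blast
  then obtain b rest where eq: "xs = i # b # rest" using assms(2)
    by (metis hd_Cons_tl last_ConsL list.collapse walk_Nil)
  then have "(i, b) \<in> T" "walk T (b # rest)" using xs by auto
  moreover have "last (b # rest) = j" using xs eq by simp
  moreover have "tdist T b j \<le> length (b # rest) - 1" using tdist_le calculation by fastforce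
  moreover have "length (b # rest) - 1 < tdist T i j" using xs eq by simp
  ultimately show ?thesis unfolding reach_def
    by (intro exI[of _ b] conjI exI[of _ "b # rest"]) auto
qed

lemma tdist_edge: "(i, j) \<in> T \<Longrightarrow> tdist T i j \<le> 1"
  using tdist_le[of T "[i, j]" i j] by simp

lemma tdist_one: "reach T i j \<Longrightarrow> tdist T i j = 1 \<Longrightarrow> (i, j) \<in> T"
proof -
  assume "reach T i j" "tdist T i j = 1"
  then obtain xs where xs: "walk T xs" "hd xs = i" "last xs = j" "length xs = 2"
    using tdist_ex by fastforce
  then obtain a b where "xs = [a, b]"
    by (metis (no_types, lifting) One_nat_def Suc_1 length_0_conv length_Suc_conv)
  with xs show ?thesis by simp
qed

lemma shortest_distinct:
  assumes xs: "walk T xs" "hd xs = i" "last xs = j" "length xs = Suc (tdist T i j)"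
  shows "distinct xs"
proof (rule ccontr)
  assume "\<not> distinct xs"
  then obtain as y bs cs where eq: "xs = as @ [y] @ bs @ [y] @ cs" using not_distinct_decomp by blast
  have "walk T (as @ y # (bs @ y # cs))" using xs eq by simp
  then have w1: "walk T (as @ [y])" and "walk T (y # bs @ y # cs)" using walk_append_iff by blast+
  then have w2: "walk T (y # cs)" using walk_append_iff[of T "y # bs" y cs] by simp
  have w: "walk T (as @ y # cs)" using w1 w2 walk_append_iff by blast
  have h: "hd (as @ y # cs) = i" using xs eq by (cases as) auto
  have l: "last (as @ y # cs) = j" using xs eq by (cases cs) auto
  have "tdist T i j \<le> length (as @ y # cs) - 1" using tdist_le[OF w h l] .
  moreover have "length (as @ y # cs) < length xs" using eq by simp
  ultimately show False using xs(4) by simp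
qed



lemma diam:
  assumes adm: "admissible V E \<delta> T" and fin: "finite V" and sub: "T \<subseteq> V \<times> V"
    and i: "i \<in> V" and j: "j \<in> V"
  shows "tdist T i j \<le> card {v\<in>V. 1 < \<delta> v} + 1"
proof -
  have st: "spanning_tree V E T" and deg: "\<forall>v\<in>V. vdeg T v = \<delta> v"
    using adm unfolding admissible_def by auto
  have symT: "sym T" using st unfolding spanning_tree_def by auto
  have "reach T i j" using st i j unfolding spanning_tree_def connected_on_def reach_def by blast
  then obtain xs where xs: "walk T xs" "hd xs = i" "last xs = j" "length xs = Suc (tdist T i j)"
    using tdist_ex by blast
  define d where "d = tdist T i j"
  have dxs: "distinct xs" using shortest_distinct[OF xs] .
  have edge: "\<And>k. Suc k < length xs \<Longrightarrow> (xs ! k, xs ! Suc k) \<in> T"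
    using xs(1) unfolding walk_def by blast
  have img: "(\<lambda>k. xs ! k) ` {1..<d} \<subseteq> {v\<in>V. 1 < \<delta> v}"
  proof
    fix v assume "v \<in> (\<lambda>k. xs ! k) ` {1..<d}"
    then obtain k where k: "1 \<le> k" "k < d" "v = xs ! k" by auto
    have e1: "(xs ! (k - 1), v) \<in> T" using edge[of "k - 1"] k xs(4) d_def by simp
    have e1': "(v, xs ! (k - 1)) \<in> T" using e1 symT by (meson symD)
    have e2: "(v, xs ! Suc k) \<in> T" using edge[of k] k xs(4) d_def by simp
    have vV: "v \<in> V" using e2 sub by auto
    have ne: "xs ! (k - 1) \<noteq> xs ! Suc k"
      using dxs k xs(4) d_def by (simp add: nth_eq_iff_index_eq)
    have "{u. (v, u) \<in> T} \<subseteq> V" using sub by auto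
    then have finN: "finite {u. (v, u) \<in> T}" using fin finite_subset by blast
    have "{xs ! (k - 1), xs ! Suc k} \<subseteq> {u. (v, u) \<in> T}" using e1' e2 by auto
    then have "card {xs ! (k - 1), xs ! Suc k} \<le> card {u. (v, u) \<in> T}"
      using finN card_mono by blast
    then have "2 \<le> vdeg T v" using ne unfolding vdeg_def by simp
    then show "v \<in> {v\<in>V. 1 < \<delta> v}" using deg vV by auto
  qed
  have "inj_on (\<lambda>k. xs ! k) {1..<d}"
    using dxs xs(4) d_def by (auto simp: inj_on_def nth_eq_iff_index_eq)
  then have "card ((\<lambda>k. xs ! k) ` {1..<d}) = d - 1" by (simp add: card_image)
  moreover have "card ((\<lambda>k. xs ! k) ` {1..<d}) \<le> card {v\<in>V. 1 < \<delta> v}"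
    using img fin by (intro card_mono) auto
  ultimately show ?thesis using d_def by linarith
qed

lemma no_cycle:
  assumes fin: "finite V" and sub: "X \<subseteq> V \<times> V" and symX: "sym X"
    and conn: "connected_on V X" and cardX: "card X \<le> 2 * (card V - 1)"
  shows "\<not> has_cycle X"
proof
  assume "has_cycle X"
  then obtain xs where xs: "walk X xs" "length xs \<ge> 4" "hd xs = last xs" "distinct (butlast xs)"
    unfolding has_cycle_def by blast
  have edge: "\<And>k. Suc k < length xs \<Longrightarrow> (xs ! k, xs ! Suc k) \<in> X"
    using xs(1) unfolding walk_def by blast
  define r where "r = xs ! 0"
  have rV: "r \<in> V" using edge[of 0] xs(2) sub r_def by auto
  define D where "D v = tdist X v r" for v
  have reachr: "\<And>v. v \<in> V \<Longrightarrow> reach X v r" using conn rV unfolding connected_on_def reach_def by blast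
  have ex: "\<forall>v\<in>V-{r}. \<exists>u. (v, u) \<in> X \<and> D u < D v"
  proof
    fix v assume v: "v \<in> V - {r}"
    then obtain u where "(v, u) \<in> X" "tdist X u r < tdist X v r"
      using tdist_step[OF reachr[of v]] by blast
    then show "\<exists>u. (v, u) \<in> X \<and> D u < D v" unfolding D_def by blast
  qed
  obtain p where p0: "\<forall>v\<in>V-{r}. (v, p v) \<in> X \<and> D (p v) < D v"
    using bchoice[OF ex] by blast
  then have p: "\<And>v. v \<in> V - {r} \<Longrightarrow> (v, p v) \<in> X \<and> D (p v) < D v" by blast
  define P1 where "P1 = (\<lambda>v. (v, p v)) ` (V - {r})"
  define P2 where "P2 = (\<lambda>v. (p v, v)) ` (V - {r})"
  have finX: "finite X" using fin sub finite_subset by blast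
  have c1: "card P1 = card V - 1" unfolding P1_def
    by (subst card_image) (auto simp: inj_on_def rV fin)
  have c2: "card P2 = card V - 1" unfolding P2_def
    by (subst card_image) (auto simp: inj_on_def rV fin)
  have disj: "P1 \<inter> P2 = {}"
  proof (rule ccontr)
    assume "P1 \<inter> P2 \<noteq> {}"
    then obtain u v where "u \<in> V - {r}" "v \<in> V - {r}" "(u, p u) = (p v, v)"
      unfolding P1_def P2_def by auto
    then have "u = p v" "v = p u" by auto
    then show False using p[of u] p[of v] \<open>u \<in> V - {r}\<close> \<open>v \<in> V - {r}\<close> by auto
  qed
  have P1X: "P1 \<subseteq> X" using p unfolding P1_def by auto
  have P2X: "P2 \<subseteq> X" using p symX unfolding P2_def by (auto intro: symD)
  define k where "k = length xs - 1"
  have k3: "k \<ge> 3" using xs(2) k_def by simp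
  have xsk: "xs ! k = xs ! 0" using xs(3) k_def xs(2)
    by (subst (asm) hd_conv_nth, force, subst (asm) last_conv_nth, force) simp
  have lb: "length (butlast xs) = k" using k_def by simp
  have dist: "\<And>a b. a < k \<Longrightarrow> b < k \<Longrightarrow> xs ! a = xs ! b \<Longrightarrow> a = b"
  proof -
    fix a b assume "a < k" "b < k" "xs ! a = xs ! b"
    then have "butlast xs ! a = butlast xs ! b" using lb by (simp add: nth_butlast)
    then show "a = b" using xs(4) lb \<open>a < k\<close> \<open>b < k\<close> by (simp add: nth_eq_iff_index_eq)
  qed
  have edgek: "\<And>s. s < k \<Longrightarrow> (xs ! s, xs ! Suc s) \<in> X" using edge k_def by simp
  define M where "M = Max ((\<lambda>s. D (xs ! s)) ` {..<k})"
  have "M \<in> (\<lambda>s. D (xs ! s)) ` {..<k}" unfolding M_def using k3 by (intro Max_in) (auto simp: lessThan_empty_iff)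
  then obtain t where t: "t < k" "D (xs ! t) = M" by auto
  have Dle: "\<And>s. s \<le> k \<Longrightarrow> D (xs ! s) \<le> D (xs ! t)"
  proof -
    fix s assume "s \<le> k"
    then have "D (xs ! s) \<in> (\<lambda>s. D (xs ! s)) ` {..<k}"
      using xsk k3 by (cases "s = k") auto
    then show "D (xs ! s) \<le> D (xs ! t)" using t M_def by simp
  qed
  define a where "a = (if t = 0 then k - 1 else t - 1)"
  have ak: "a < k" "a \<le> k" using a_def t k3 by auto
  have prev: "(xs ! a, xs ! t) \<in> X"
  proof (cases "t = 0")
    case True then show ?thesis using edgek[of "k - 1"] k3 xsk a_def by simp
  next
    case False then show ?thesis using edgek[of "t - 1"] t a_def by simp
  qed
  have next': "(xs ! t, xs ! Suc t) \<in> X" using edgek t by simp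
  have ne: "xs ! a \<noteq> xs ! Suc t"
  proof (cases "t = 0")
    case True then show ?thesis using dist[of "k - 1" 1] a_def k3 by auto
  next
    case False
    then have "t \<noteq> 0" .
    show ?thesis
    proof (cases "Suc t = k")
      case True
      have "a < k" "0 < k" "a \<noteq> 0" using a_def False k3 True by auto
      then show ?thesis using dist[of a 0] xsk True by auto
    next
      case False2: False
      have "a < k" "Suc t < k" "a \<noteq> Suc t" using a_def t \<open>t \<noteq> 0\<close> False2 by auto
      then show ?thesis using dist[of a "Suc t"] by auto
    qed
  qed
  have Da: "D (xs ! a) \<le> D (xs ! t)" using Dle ak by simp
  have Dn: "D (xs ! Suc t) \<le> D (xs ! t)" using Dle t by simp
  have "(xs ! t, xs ! Suc t) \<notin> P1 \<union> P2 \<or> (xs ! a, xs ! t) \<notin> P1 \<union> P2"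
  proof (rule ccontr)
    assume "\<not> ?thesis"
    then have A: "(xs ! t, xs ! Suc t) \<in> P1 \<union> P2" and B: "(xs ! a, xs ! t) \<in> P1 \<union> P2" by auto
    have n1: "xs ! Suc t = p (xs ! t)"
    proof -
      { assume "(xs ! t, xs ! Suc t) \<in> P2"
        then obtain u where "u \<in> V - {r}" "(p u, u) = (xs ! t, xs ! Suc t)" unfolding P2_def by (metis (no_types, lifting) imageE)
        then have "D (p u) < D u" "u = xs ! Suc t" "p u = xs ! t" using p[of u] by auto
        then have False using Dn by simp }
      then show ?thesis using A unfolding P1_def by auto
    qed
    have n2: "xs ! a = p (xs ! t)"
    proof -
      { assume "(xs ! a, xs ! t) \<in> P1"
        then obtain u where "u \<in> V - {r}" "(u, p u) = (xs ! a, xs ! t)" unfolding P1_def by (metis (no_types, lifting) imageE)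
        then have "D (p u) < D u" "u = xs ! a" "p u = xs ! t" using p[of u] by auto
        then have False using Da by simp }
      then show ?thesis using B unfolding P2_def by auto
    qed
    show False using n1 n2 ne by simp
  qed
  then obtain e where e: "e \<in> X" "e \<notin> P1 \<union> P2" using prev next' by blast
  have "card (insert e (P1 \<union> P2)) = Suc (card P1 + card P2)"
  proof -
    have f1: "finite P1" "finite P2" using P1X P2X finX finite_subset by blast+
    then have "card (P1 \<union> P2) = card P1 + card P2" using disj card_Un_disjoint by blast
    then show ?thesis using f1 e(2) by simp
  qed
  moreover have "card (insert e (P1 \<union> P2)) \<le> card X"
    using e P1X P2X finX by (intro card_mono) auto
  ultimately show False using c1 c2 cardX by linarith
qed



lemma feasD:
  assumes "F2Q_feasible n E \<delta> L x w"
  shows feas_x: "\<And>i j. (i,j) \<in> E \<Longrightarrow> x i j \<in> {0,1} \<and> x i j = x j i"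
  and feas_w: "\<And>i j l. i\<in>{1..n} \<Longrightarrow> j\<in>{1..n} \<Longrightarrow> i \<noteq> j \<Longrightarrow> l\<in>{1..L} \<Longrightarrow> w l i j = w l j i \<and> 0 \<le> w l i j \<and> w l i j \<le> 1"
  and feas_w1E: "\<And>i j. (i,j)\<in>E \<Longrightarrow> w 1 i j = x i j"
  and feas_w1N: "\<And>i j. i\<in>{1..n} \<Longrightarrow> j\<in>{1..n} \<Longrightarrow> i<j \<Longrightarrow> (i,j)\<notin>E \<Longrightarrow> w 1 i j = 0"
  and feas_E: "\<And>i j l. (i,j)\<in>E \<Longrightarrow> i<j \<Longrightarrow> l\<in>{2..L} \<Longrightarrow>
      w l i j \<le> x i j + (\<Sum>k\<in>{k\<in>{1..n}. k \<noteq> j \<and> (i, k) \<in> E}. x i k * w (l - 1) k j)"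
  and feas_N: "\<And>i j l. i\<in>{1..n} \<Longrightarrow> j\<in>{1..n} \<Longrightarrow> i<j \<Longrightarrow> (i,j)\<notin>E \<Longrightarrow> l\<in>{2..L} \<Longrightarrow>
      w l i j \<le> (\<Sum>k\<in>{k\<in>{1..n}. k \<noteq> j \<and> (i, k) \<in> E}. x i k * w (l - 1) k j)"
  and feas_L: "\<And>i j. i\<in>{1..n} \<Longrightarrow> j\<in>{1..n} \<Longrightarrow> i<j \<Longrightarrow> w L i j = 1"
  and feas_deg: "\<And>i. i\<in>{1..n} \<Longrightarrow> (\<Sum>j\<in>{j\<in>{1..n}. (i, j) \<in> E}. x i j) = real (\<delta> i)"
  using assms unfolding F2Q_feasible_def by (auto dest: bspec)

lemma sum_indicator:
  assumes "finite A"
  shows "(\<Sum>j\<in>A. if P j then 1 else (0::real)) = real (card {j\<in>A. P j})"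
  using assms by (simp add: sum.inter_filter[symmetric])

lemma count_sum:
  assumes "1 \<le> d" "d \<le> L"
  shows "(\<Sum>l\<in>{1..L-1}. if d \<le> l then 1 else (0::real)) = real L - real d"
proof -
  have "(\<Sum>l\<in>{1..L-1}. if d \<le> l then 1 else (0::real)) = real (card {l\<in>{1..L-1}. d \<le> l})"
    by (rule sum_indicator) simp
  also have "{l\<in>{1..L-1}. d \<le> l} = {d..L-1}" using assms by auto
  also have "card {d..L-1} = L - d" using assms by simp
  finally show ?thesis using assms by simp
qed

lemma feas_reach:
  assumes F: "F2Q_feasible n E \<delta> L x w" and G: "graph_on {1..n} E"
  shows "1 \<le> l \<Longrightarrow> l \<le> L \<Longrightarrow> i\<in>{1..n} \<Longrightarrow> j\<in>{1..n} \<Longrightarrow> i \<noteq> j \<Longrightarrow> 0 < w l i j \<Longrightarrow>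
    \<exists>xs. walk {(i,j)\<in>E. x i j = 1} xs \<and> hd xs = i \<and> last xs = j \<and> length xs \<le> Suc l"
proof (induction l arbitrary: i j)
  case 0 then show ?case by simp
next
  case (Suc l)
  define X where "X = {(i,j)\<in>E. x i j = 1}"
  have symE: "sym E" using G unfolding graph_on_def by auto
  have symX: "sym X" unfolding X_def
    by (rule symI) (use symE feas_x[OF F] in \<open>auto dest: symD\<close>)
  have edgeX: "\<And>a b. (a,b)\<in>E \<Longrightarrow> x a b \<noteq> 0 \<Longrightarrow> (a,b) \<in> X" using feas_x[OF F] X_def by auto
  have main: "\<exists>xs. walk X xs \<and> hd xs = a \<and> last xs = b \<and> length xs \<le> Suc (Suc l)"
    if ab: "a\<in>{1..n}" "b\<in>{1..n}" "a < b" "0 < w (Suc l) a b" for a b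
  proof (cases "l = 0")
    case True
    then have w1: "0 < w 1 a b" using ab by simp
    have "(a,b) \<in> E" using feas_w1N[OF F ab(1,2,3)] w1 by fastforce
    then have "(a,b) \<in> X" using edgeX feas_w1E[OF F] w1 by fastforce
    then show ?thesis by (intro exI[of _ "[a,b]"]) (simp add: True)
  next
    case False
    have lL: "Suc l \<in> {2..L}" using False Suc.prems by auto
    define K where "K = {k\<in>{1..n}. k \<noteq> b \<and> (a, k) \<in> E}"
    define S where "S = (\<Sum>k\<in>K. x a k * w l k b)"
    have "((a,b) \<in> E \<and> x a b \<noteq> 0) \<or> 0 < S"
    proof (cases "(a,b) \<in> E")
      case True
      then show ?thesis using feas_E[OF F True ab(3) lL] ab(4) unfolding S_def K_def by auto
    next
      case False
      then show ?thesis using feas_N[OF F ab(1,2,3) False lL] ab(4) unfolding S_def K_def by auto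
    qed
    then show ?thesis
    proof
      assume "(a,b) \<in> E \<and> x a b \<noteq> 0"
      then have "(a,b) \<in> X" using edgeX by blast
      then show ?thesis by (intro exI[of _ "[a,b]"]) simp
    next
      assume S0: "0 < S"
      have "\<exists>k\<in>K. 0 < x a k * w l k b"
      proof (rule ccontr)
        assume "\<not> ?thesis"
        then have "S \<le> 0" unfolding S_def by (intro sum_nonpos) auto
        then show False using S0 by simp
      qed
      then obtain k where k: "k \<in> K" "0 < x a k * w l k b" by blast
      have kE: "(a,k) \<in> E" "k \<in> {1..n}" "k \<noteq> b" using k(1) K_def by auto
      have xak: "x a k = 1" using k(2) feas_x[OF F kE(1)] by auto
      then have akX: "(a,k) \<in> X" using kE edgeX by simp
      have "0 < w l k b" using k(2) xak by simp
      then obtain ys where ys: "walk X ys" "hd ys = k" "last ys = b" "length ys \<le> Suc l"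
        using Suc.IH[of k b] False Suc.prems kE ab(2) X_def by auto
      have "ys \<noteq> []" using ys by auto
      then show ?thesis using ys akX walk_Cons_hd[of X ys a]
        by (intro exI[of _ "a # ys"]) auto
    qed
  qed
  have lL1: "Suc l \<in> {1..L}" using Suc.prems by auto
  show ?case
  proof (cases "i < j")
    case True then show ?thesis using main[of i j] Suc.prems X_def by auto
  next
    case False
    then have "j < i" using Suc.prems by auto
    moreover have "0 < w (Suc l) j i" using feas_w[OF F _ _ _ lL1, of i j] Suc.prems by auto
    ultimately obtain ys where ys: "walk X ys" "hd ys = j" "last ys = i" "length ys \<le> Suc (Suc l)"
      using main[of j i] Suc.prems by auto
    have "ys \<noteq> []" using ys by auto
    then show ?thesis using ys walk_rev[OF symX ys(1)] X_def
      by (intro exI[of _ "rev ys"]) (auto simp: hd_rev last_rev)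
  qed
qed



lemma feas_bound:
  assumes F: "F2Q_feasible n E \<delta> L x w" and G: "graph_on {1..n} E"
    and i: "i\<in>{1..n}" and j: "j\<in>{1..n}" and ij: "i \<noteq> j" and L1: "1 \<le> L"
  shows "reach {(i,j)\<in>E. x i j = 1} i j"
    and "real (tdist {(i,j)\<in>E. x i j = 1} i j) \<le> real L - (\<Sum>l\<in>{1..L-1}. w l i j)"
proof -
  define X where "X = {(i,j)\<in>E. x i j = 1}"
  have wL: "w L i j = 1"
  proof (cases "i < j")
    case True then show ?thesis using feas_L[OF F i j] by simp
  next
    case False
    then have "j < i" using ij by simp
    then show ?thesis using feas_L[OF F j i] feas_w[OF F i j ij, of L] L1 by simp
  qed
  obtain xs where xs: "walk X xs" "hd xs = i" "last xs = j" "length xs \<le> Suc L"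
    using feas_reach[OF F G L1 _ i j ij] wL X_def by auto
  show r: "reach {(i,j)\<in>E. x i j = 1} i j" using xs X_def reach_def by blast
  define d where "d = tdist X i j"
  have dL: "d \<le> L" using tdist_le[OF xs(1-3)] xs(4) d_def by simp
  have d1: "1 \<le> d" using tdist_zero[of X i j] r ij X_def d_def by fastforce
  have "(\<Sum>l\<in>{1..L-1}. w l i j) \<le> (\<Sum>l\<in>{1..L-1}. if d \<le> l then 1 else (0::real))"
  proof (rule sum_mono)
    fix l assume l: "l \<in> {1..L-1}"
    have "l \<in> {1..L}" using l by auto
    then have bnd: "0 \<le> w l i j \<and> w l i j \<le> 1" using feas_w[OF F i j ij, of l] by blast
    show "w l i j \<le> (if d \<le> l then 1 else 0)"
    proof (cases "0 < w l i j")
      case True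
      then obtain ys where ys: "walk X ys" "hd ys = i" "last ys = j" "length ys \<le> Suc l"
        using feas_reach[OF F G _ _ i j ij, of l] l X_def \<open>l \<in> {1..L}\<close> by auto
      then have "d \<le> l" using tdist_le[OF ys(1-3)] d_def by simp
      then show ?thesis using bnd by simp
    next
      case False then show ?thesis using bnd by simp
    qed
  qed
  also have "\<dots> = real L - real d" using count_sum[OF d1 dL] .
  finally show "real (tdist {(i,j)\<in>E. x i j = 1} i j) \<le> real L - (\<Sum>l\<in>{1..L-1}. w l i j)"
    using d_def X_def by simp
qed

lemma feas_adm:
  assumes F: "F2Q_feasible n E \<delta> L x w" and G: "graph_on {1..n} E" and L1: "1 \<le> L"
    and delta_sum: "(\<Sum>i\<in>{1..n}. \<delta> i) = 2 * (n - 1)"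
  shows "admissible {1..n} E \<delta> {(i,j)\<in>E. x i j = 1}"
proof -
  define X where "X = {(i,j)\<in>E. x i j = 1}"
  have symE: "sym E" and EV: "E \<subseteq> {1..n} \<times> {1..n}" using G unfolding graph_on_def by auto
  have symX: "sym X" unfolding X_def
    by (rule symI) (use symE feas_x[OF F] in \<open>auto dest: symD\<close>)
  have XV: "X \<subseteq> {1..n} \<times> {1..n}" using EV X_def by auto
  have conn: "connected_on {1..n} X" unfolding connected_on_def
  proof (intro ballI)
    fix i j assume i: "i \<in> {1..n}" and j: "j \<in> {1..n}"
    show "\<exists>xs. walk X xs \<and> hd xs = i \<and> last xs = j"
    proof (cases "i = j")
      case True then show ?thesis by (intro exI[of _ "[i]"]) simp
    next
      case False then show ?thesis using feas_bound(1)[OF F G i j False L1] X_def reach_def by simp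
    qed
  qed
  have deg: "vdeg X i = \<delta> i" if i: "i \<in> {1..n}" for i
  proof -
    define A where "A = {j\<in>{1..n}. (i, j) \<in> E}"
    have "(\<Sum>j\<in>A. x i j) = (\<Sum>j\<in>A. if x i j = 1 then 1 else 0)"
    proof (rule sum.cong)
      fix j assume "j \<in> A"
      then have "x i j \<in> {0,1}" using feas_x[OF F, of i j] A_def by auto
      then show "x i j = (if x i j = 1 then 1 else 0)" by auto
    qed simp
    also have "\<dots> = real (card {j\<in>A. x i j = 1})" by (rule sum_indicator) (simp add: A_def)
    also have "{j\<in>A. x i j = 1} = {j. (i,j) \<in> X}" using A_def X_def EV by auto
    finally show ?thesis using feas_deg[OF F i] A_def vdeg_def by simp
  qed
  have XS: "X = Sigma {1..n} (\<lambda>i. {j. (i,j) \<in> X})" using XV by auto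
  then have "card X = (\<Sum>i\<in>{1..n}. card {j. (i,j) \<in> X})"
  proof -
    have "\<forall>i\<in>{1..n}. finite {j. (i,j) \<in> X}"
    proof
      fix i have "{j. (i,j) \<in> X} \<subseteq> {1..n}" using XV by auto
      then show "finite {j. (i,j) \<in> X}" using finite_subset by blast
    qed
    then have "card (Sigma {1..n} (\<lambda>i. {j. (i,j) \<in> X})) = (\<Sum>i\<in>{1..n}. card {j. (i,j) \<in> X})"
      by (intro card_SigmaI) auto
    then show ?thesis using XS by metis
  qed
  also have "\<dots> = (\<Sum>i\<in>{1..n}. \<delta> i)" using deg vdeg_def by (intro sum.cong) auto
  finally have cX: "card X \<le> 2 * (card {1..n} - 1)" using delta_sum by simp
  have "\<not> has_cycle X" using no_cycle[OF _ XV symX conn cX] by simp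
  then show ?thesis unfolding admissible_def spanning_tree_def using deg symX conn X_def by auto
qed



theorem proposition2:
  fixes n :: nat and E :: "(nat \<times> nat) set" and \<mu> :: "nat \<Rightarrow> nat \<Rightarrow> real"
    and \<delta> :: "nat \<Rightarrow> nat" and m L :: nat
  assumes G: "graph_on {1..n} E"
    and mu_sym: "\<forall>i\<in>{1..n}. \<forall>j\<in>{1..n}. i \<noteq> j \<longrightarrow> \<mu> i j = \<mu> j i \<and> 0 \<le> \<mu> i j"
    and delta_pos: "\<forall>i\<in>{1..n}. 0 < \<delta> i"
    and delta_sum: "(\<Sum>i\<in>{1..n}. \<delta> i) = 2 * (n - 1)"
    and adm: "\<exists>T. admissible {1..n} E \<delta> T"
    and m_def: "m = card {i\<in>{1..n}. 1 < \<delta> i}"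
    and L_def: "L = m + 2"
  shows "\<exists>x w. F2Q_feasible n E \<delta> L x w \<and>
           (\<forall>x' w'. F2Q_feasible n E \<delta> L x' w' \<longrightarrow> F2Q_obj n \<mu> L w \<le> F2Q_obj n \<mu> L w') \<and>
           optimal_tree {1..n} E \<delta> \<mu> {(i, j)\<in>E. x i j = 1} \<and>
           F2Q_obj n \<mu> L w = CA {1..n} \<mu> {(i, j)\<in>E. x i j = 1}"
proof -
  have symE: "sym E" and EV: "E \<subseteq> {1..n} \<times> {1..n}" and noloop: "\<And>i. (i,i) \<notin> E"
    using G unfolding graph_on_def by auto
  have finE: "finite E" using EV finite_subset by blast
  have L1: "1 \<le> L" using L_def by simp
  let ?A = "{T. admissible {1..n} E \<delta> T}"
  have "?A \<subseteq> Pow E" unfolding admissible_def spanning_tree_def by auto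
  then have finA: "finite ?A" using finE finite_subset by blast
  have neA: "?A \<noteq> {}" using adm by auto
  define c where "c = Min (CA {1..n} \<mu> ` ?A)"
  have "c \<in> CA {1..n} \<mu> ` ?A" unfolding c_def using finA neA by (intro Min_in) auto
  then obtain T where T: "admissible {1..n} E \<delta> T" "CA {1..n} \<mu> T = c" by auto
  have Tmin: "\<And>T'. admissible {1..n} E \<delta> T' \<Longrightarrow> CA {1..n} \<mu> T \<le> CA {1..n} \<mu> T'"
    using T(2) c_def finA by (simp add: Min_le)
  have optT: "optimal_tree {1..n} E \<delta> \<mu> T" unfolding optimal_tree_def using T Tmin by blast
  have TE: "T \<subseteq> E" and symT: "sym T" and connT: "connected_on {1..n} T"
    using T(1) unfolding admissible_def spanning_tree_def by auto
  have TV: "T \<subseteq> {1..n} \<times> {1..n}" using TE EV by auto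
  have reachT: "\<And>i j. i \<in> {1..n} \<Longrightarrow> j \<in> {1..n} \<Longrightarrow> reach T i j"
    using connT unfolding connected_on_def reach_def by blast
  have diamT: "\<And>i j. i \<in> {1..n} \<Longrightarrow> j \<in> {1..n} \<Longrightarrow> tdist T i j \<le> L - 1"
    using diam[OF T(1) _ TV] m_def L_def by fastforce
  define x0 where "x0 i j = (if (i,j) \<in> T then 1 else (0::real))" for i j
  define w0 where "w0 l i j = (if tdist T i j \<le> l then 1 else (0::real))" for l i j
  have Xeq: "{(i,j)\<in>E. x0 i j = 1} = T" using TE by (auto simp: x0_def)
  have d1: "\<And>i j. i \<in> {1..n} \<Longrightarrow> j \<in> {1..n} \<Longrightarrow> i \<noteq> j \<Longrightarrow> 1 \<le> tdist T i j"
    using tdist_zero reachT by (metis less_one not_le)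
  have le1: "\<And>i j. i \<in> {1..n} \<Longrightarrow> j \<in> {1..n} \<Longrightarrow> i \<noteq> j \<Longrightarrow> tdist T i j \<le> 1 \<longleftrightarrow> (i,j) \<in> T"
    using d1 tdist_one reachT tdist_edge by (metis le_antisym)
  have ineq: "w0 l i j \<le> x0 i j + (\<Sum>k\<in>{k\<in>{1..n}. k \<noteq> j \<and> (i, k) \<in> E}. x0 i k * w0 (l - 1) k j)"
    if i: "i \<in> {1..n}" and j: "j \<in> {1..n}" and ij: "i \<noteq> j" for l i j
  proof -
    define K where "K = {k\<in>{1..n}. k \<noteq> j \<and> (i, k) \<in> E}"
    have nn: "0 \<le> (\<Sum>k\<in>K. x0 i k * w0 (l - 1) k j)"
      by (intro sum_nonneg) (auto simp: x0_def w0_def)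
    have x0nn: "0 \<le> x0 i j" by (simp add: x0_def)
    show ?thesis
    proof (cases "tdist T i j \<le> l")
      case False then show ?thesis using nn x0nn K_def by (simp add: w0_def)
    next
      case True
      show ?thesis
      proof (cases "(i,j) \<in> T")
        case True then show ?thesis using nn K_def by (simp add: w0_def x0_def)
      next
        case False
        obtain k where k: "(i,k) \<in> T" "tdist T k j < tdist T i j"
          using tdist_step[OF reachT[OF i j] ij] by blast
        have kj: "k \<noteq> j" using k False by auto
        have kK: "k \<in> K" using k kj TE TV K_def by auto
        have "x0 i k * w0 (l - 1) k j = 1" using k True by (simp add: x0_def w0_def)
        moreover have "x0 i k * w0 (l - 1) k j \<le> (\<Sum>k\<in>K. x0 i k * w0 (l - 1) k j)"
          using kK K_def by (intro member_le_sum) (auto simp: x0_def w0_def)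
        ultimately show ?thesis using x0nn K_def by (simp add: w0_def)
      qed
    qed
  qed
  have feas0: "F2Q_feasible n E \<delta> L x0 w0"
    unfolding F2Q_feasible_def
  proof (intro conjI)
    show "\<forall>(i, j)\<in>E. x0 i j \<in> {0, 1} \<and> x0 i j = x0 j i"
      using symT by (auto simp: x0_def dest: symD)
    show "\<forall>i\<in>{1..n}. \<forall>j\<in>{1..n}. i \<noteq> j \<longrightarrow>
        (\<forall>l\<in>{1..L}. w0 l i j = w0 l j i \<and> 0 \<le> w0 l i j \<and> w0 l i j \<le> 1)"
      using tdist_sym[OF symT reachT] by (auto simp: w0_def)
    show "\<forall>(i, j)\<in>E. w0 1 i j = x0 i j"
    proof (intro ballI, clarify)
      fix i j assume "(i,j) \<in> E"
      then have "i \<in> {1..n}" "j \<in> {1..n}" "i \<noteq> j" using EV noloop by auto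
      then show "w0 1 i j = x0 i j" using le1 by (simp add: w0_def x0_def)
    qed
    show "\<forall>i\<in>{1..n}. \<forall>j\<in>{1..n}. i < j \<and> (i, j) \<notin> E \<longrightarrow> w0 1 i j = 0"
      using le1 TE by (auto simp: w0_def)
    show "\<forall>(i, j)\<in>E. i < j \<longrightarrow> (\<forall>l\<in>{2..L}.
        w0 l i j \<le> x0 i j + (\<Sum>k\<in>{k\<in>{1..n}. k \<noteq> j \<and> (i, k) \<in> E}. x0 i k * w0 (l - 1) k j))"
    proof (intro ballI impI, clarify)
      fix i j l assume "(i,j) \<in> E"
      then have "i \<in> {1..n}" "j \<in> {1..n}" "i \<noteq> j" using EV noloop by auto
      then show "w0 l i j \<le> x0 i j + (\<Sum>k\<in>{k\<in>{1..n}. k \<noteq> j \<and> (i, k) \<in> E}. x0 i k * w0 (l - 1) k j)"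
        using ineq by blast
    qed
    show "\<forall>i\<in>{1..n}. \<forall>j\<in>{1..n}. i < j \<and> (i, j) \<notin> E \<longrightarrow> (\<forall>l\<in>{2..L}.
        w0 l i j \<le> (\<Sum>k\<in>{k\<in>{1..n}. k \<noteq> j \<and> (i, k) \<in> E}. x0 i k * w0 (l - 1) k j))"
    proof (intro ballI impI, clarify)
      fix i j l assume h: "i \<in> {1..n}" "j \<in> {1..n}" "i < j" "(i,j) \<notin> E"
      then have "x0 i j = 0" using TE by (auto simp: x0_def)
      then show "w0 l i j \<le> (\<Sum>k\<in>{k\<in>{1..n}. k \<noteq> j \<and> (i, k) \<in> E}. x0 i k * w0 (l - 1) k j)"
        using ineq[of i j l] h by simp
    qed
    show "\<forall>i\<in>{1..n}. \<forall>j\<in>{1..n}. i < j \<longrightarrow> w0 L i j = 1"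
    proof (intro ballI impI)
      fix i j assume "i \<in> {1..n}" "j \<in> {1..n}"
      then have "tdist T i j \<le> L" using diamT[of i j] by simp
      then show "w0 L i j = 1" by (simp add: w0_def)
    qed
    show "\<forall>i\<in>{1..n}. (\<Sum>j\<in>{j\<in>{1..n}. (i, j) \<in> E}. x0 i j) = real (\<delta> i)"
    proof
      fix i assume i: "i \<in> {1..n}"
      have "(\<Sum>j\<in>{j\<in>{1..n}. (i, j) \<in> E}. x0 i j) = real (card {j\<in>{j\<in>{1..n}. (i, j) \<in> E}. (i,j) \<in> T})"
        unfolding x0_def by (rule sum_indicator) simp
      also have "{j\<in>{j\<in>{1..n}. (i, j) \<in> E}. (i,j) \<in> T} = {j. (i,j) \<in> T}" using TE TV by auto
      also have "card {j. (i,j) \<in> T} = \<delta> i" using T(1) i unfolding admissible_def vdeg_def by auto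
      finally show "(\<Sum>j\<in>{j\<in>{1..n}. (i, j) \<in> E}. x0 i j) = real (\<delta> i)" .
    qed
  qed
  have obj0: "F2Q_obj n \<mu> L w0 = CA {1..n} \<mu> T"
    unfolding F2Q_obj_def CA_def
  proof (intro sum.cong refl)
    fix i j assume i: "i \<in> {1..n}" and j: "j \<in> {1..n} - {i}"
    have "1 \<le> tdist T i j" "tdist T i j \<le> L" using d1[of i j] diamT[of i j] i j by auto
    then have "(\<Sum>l\<in>{1..L-1}. w0 l i j) = real L - real (tdist T i j)"
      unfolding w0_def by (rule count_sum)
    then show "\<mu> i j * (real L - (\<Sum>l\<in>{1..L-1}. w0 l i j)) = \<mu> i j * real (tdist T i j)" by simp
  qed
  have lb: "F2Q_obj n \<mu> L w0 \<le> F2Q_obj n \<mu> L w'" if F: "F2Q_feasible n E \<delta> L x' w'" for x' w'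
  proof -
    have admX: "admissible {1..n} E \<delta> {(i,j)\<in>E. x' i j = 1}"
      using feas_adm[OF F G L1 delta_sum] .
    have "CA {1..n} \<mu> {(i,j)\<in>E. x' i j = 1} \<le> F2Q_obj n \<mu> L w'"
      unfolding F2Q_obj_def CA_def
    proof (intro sum_mono)
      fix i j assume i: "i \<in> {1..n}" and j: "j \<in> {1..n} - {i}"
      have "0 \<le> \<mu> i j" using mu_sym i j by auto
      moreover have "real (tdist {(i,j)\<in>E. x' i j = 1} i j) \<le> real L - (\<Sum>l\<in>{1..L-1}. w' l i j)"
        using feas_bound(2)[OF F G i _ _ L1, of j] j by auto
      ultimately show "\<mu> i j * real (tdist {(i,j)\<in>E. x' i j = 1} i j) \<le> \<mu> i j * (real L - (\<Sum>l\<in>{1..L-1}. w' l i j))"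
        by (simp add: mult_left_mono)
    qed
    then show ?thesis using obj0 Tmin[OF admX] by linarith
  qed
  show ?thesis
    by (rule exI[of _ x0], rule exI[of _ w0]) (use feas0 lb optT obj0 Xeq in auto)
qed

end
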